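(* Let $f:(R,\mathfrak{m})\to(S,\mathfrak{n})$ and $g:(S,\mathfrak{n})\to(R,\mathfrak{m})$ be homomorphisms of finite length of Noetherian local rings. Then $g\circ f$ and $f\circ g$ are self-maps of finite length of $R$ and $S$ respectively, and $h_{\mathrm{alg}}(g\circ f,R)=h_{\mathrm{alg}}(f\circ g,S)$.
   Context: A homomorphism $u:(A,\mathfrak{a})\to(B,\mathfrak{b})$ of Noetherian local rings is of finite length if it is local and $u(\mathfrak{a})B$ is $\mathfrak{b}$-primary; its length is $\lambda(u):=\ell_B(B/u(\mathfrak{a})B)$. For a self-map of finite length $\psi$ of a Noetherian local ring $A$, the algebraic entropy is $h_{\mathrm{alg}}(\psi,A):=\lim_{n\to\infty}\frac1n\log\lambda(\psi^n)$ (the limit exists). *)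

theory Defs
  imports "HOL-Algebra.Ring_Divisibility" "HOL-Algebra.RingHom" "HOL-Library.Extended_Nat" Complex_Main
begin

definition local_ring :: "('a, 'm) ring_scheme \<Rightarrow> bool" where
  "local_ring R \<longleftrightarrow> cring R \<and> (\<exists>!m. maximalideal m R)"

definition noeth_local_ring :: "('a, 'm) ring_scheme \<Rightarrow> bool" where
  "noeth_local_ring R \<longleftrightarrow> local_ring R \<and> noetherian_ring R"

definition max_ideal :: "('a, 'm) ring_scheme \<Rightarrow> 'a set" where
  "max_ideal R = (THE m. maximalideal m R)"

definition radical :: "('a, 'm) ring_scheme \<Rightarrow> 'a set \<Rightarrow> 'a set" where
  "radical R I = {x \<in> carrier R. \<exists>n::nat. x [^]\<^bsub>R\<^esub> n \<in> I}"

definition primary_ideal :: "('a, 'm) ring_scheme \<Rightarrow> 'a set \<Rightarrow> bool" where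
  "primary_ideal R Q \<longleftrightarrow> ideal Q R \<and> Q \<noteq> carrier R \<and>
     (\<forall>a \<in> carrier R. \<forall>b \<in> carrier R. a \<otimes>\<^bsub>R\<^esub> b \<in> Q \<longrightarrow> a \<in> Q \<or> (\<exists>n::nat. b [^]\<^bsub>R\<^esub> n \<in> Q))"

definition P_primary :: "('a, 'm) ring_scheme \<Rightarrow> 'a set \<Rightarrow> 'a set \<Rightarrow> bool" where
  "P_primary R P Q \<longleftrightarrow> primary_ideal R Q \<and> radical R Q = P"

text \<open>Length of the R-module R/I: the supremum of the lengths n of strict chains of
  submodules 0 = M_0 < M_1 < ... < M_n = R/I, which correspond exactly to strict chains
  of ideals I = J_0 < J_1 < ... < J_n = R.\<close>
definition ideal_chain :: "('a, 'm) ring_scheme \<Rightarrow> 'a set \<Rightarrow> nat \<Rightarrow> (nat \<Rightarrow> 'a set) \<Rightarrow> bool" where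
  "ideal_chain R I n J \<longleftrightarrow> J 0 = I \<and> J n = carrier R \<and> (\<forall>i\<le>n. ideal (J i) R) \<and>
     (\<forall>i<n. J i \<subset> J (Suc i))"

definition quot_length :: "('a, 'm) ring_scheme \<Rightarrow> 'a set \<Rightarrow> enat" where
  "quot_length R I = Sup {enat n | n. \<exists>J. ideal_chain R I n J}"

definition finite_length_hom ::
  "('a, 'm) ring_scheme \<Rightarrow> ('b, 'n) ring_scheme \<Rightarrow> ('a \<Rightarrow> 'b) \<Rightarrow> bool" where
  "finite_length_hom A B u \<longleftrightarrow> u \<in> ring_hom A B \<and> u ` max_ideal A \<subseteq> max_ideal B \<and>
     P_primary B (max_ideal B) (Idl\<^bsub>B\<^esub> (u ` max_ideal A))"

definition hom_length :: "('a, 'm) ring_scheme \<Rightarrow> ('b, 'n) ring_scheme \<Rightarrow> ('a \<Rightarrow> 'b) \<Rightarrow> enat" where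
  "hom_length A B u = quot_length B (Idl\<^bsub>B\<^esub> (u ` max_ideal A))"

definition h_alg :: "('a, 'm) ring_scheme \<Rightarrow> ('a \<Rightarrow> 'a) \<Rightarrow> real" where
  "h_alg A \<psi> = lim (\<lambda>n. ln (real (the_enat (hom_length A A (\<psi> ^^ n)))) / real n)"

end

theory Submission
  imports Defs
begin

definition pl :: "('a, 'm) ring_scheme \<Rightarrow> 'a set \<Rightarrow> 'a \<Rightarrow> 'a set" where
  "pl R I y = {i \<oplus>\<^bsub>R\<^esub> y \<otimes>\<^bsub>R\<^esub> r | i r. i \<in> I \<and> r \<in> carrier R}"

definition colI :: "('a, 'm) ring_scheme \<Rightarrow> 'a set \<Rightarrow> 'a \<Rightarrow> 'a set" where
  "colI R I y = {r \<in> carrier R. y \<otimes>\<^bsub>R\<^esub> r \<in> I}"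

lemma pl_memI: "i \<in> I \<Longrightarrow> r \<in> carrier R \<Longrightarrow> i \<oplus>\<^bsub>R\<^esub> y \<otimes>\<^bsub>R\<^esub> r \<in> pl R I y"
  unfolding pl_def by auto

lemma pl_memE: "x \<in> pl R I y \<Longrightarrow> \<exists>i r. x = i \<oplus>\<^bsub>R\<^esub> y \<otimes>\<^bsub>R\<^esub> r \<and> i \<in> I \<and> r \<in> carrier R"
  unfolding pl_def by simp

lemma ideal_carr: "ideal I R \<Longrightarrow> I \<subseteq> carrier R"
  by (simp add: ideal.Icarr subsetI)

context cring begin

lemma pl_ideal:
  assumes I: "ideal I R" and y: "y \<in> carrier R"
  shows "ideal (pl R I y) R"
proof -
  have Ic: "I \<subseteq> carrier R" using ideal_carr[OF I] .
  have z: "\<zero> \<in> I" using additive_subgroup.zero_closed[OF ideal.axioms(1)[OF I]] .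
  have ac: "\<And>a b. a \<in> I \<Longrightarrow> b \<in> I \<Longrightarrow> a \<oplus> b \<in> I" using additive_subgroup.a_closed[OF ideal.axioms(1)[OF I]] .
  have ai: "\<And>a. a \<in> I \<Longrightarrow> \<ominus> a \<in> I" using additive_subgroup.a_inv_closed[OF ideal.axioms(1)[OF I]] .
  show ?thesis
    apply (rule idealI[OF ring_axioms], rule add.subgroupI)
  proof -
    show "pl R I y \<subseteq> carrier R" using Ic y by (auto simp: pl_def)
    show "pl R I y \<noteq> {}" using pl_memI[where y=y, OF z zero_closed] by blast
  next
    fix a assume "a \<in> pl R I y"
    then obtain i r where a: "a = i \<oplus> y \<otimes> r" "i \<in> I" "r \<in> carrier R" using pl_memE by metis
    have ic: "i \<in> carrier R" using a Ic by blast
    have "\<ominus> a = (\<ominus> i) \<oplus> y \<otimes> (\<ominus> r)" using a ic y by (simp add: minus_add r_minus)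
    then show "\<ominus> a \<in> pl R I y" using pl_memI[where y=y, OF ai[OF a(2)] a_inv_closed[OF a(3)]] by simp
  next
    fix a b assume "a \<in> pl R I y" "b \<in> pl R I y"
    then obtain i r j s where a: "a = i \<oplus> y \<otimes> r" "i \<in> I" "r \<in> carrier R"
       and b: "b = j \<oplus> y \<otimes> s" "j \<in> I" "s \<in> carrier R" using pl_memE by metis
    have ic: "i \<in> carrier R" "j \<in> carrier R" using a b Ic by auto
    have "a \<oplus> b = (i \<oplus> j) \<oplus> y \<otimes> (r \<oplus> s)"
      using a b ic y by (simp add: r_distr a_ac)
    then show "a \<oplus> b \<in> pl R I y" using pl_memI[where y=y, OF ac[OF a(2) b(2)] add.m_closed[OF a(3) b(3)]] by simp
  next
    fix a x assume "a \<in> pl R I y" "x \<in> carrier R"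
    then obtain i r where a: "a = i \<oplus> y \<otimes> r" "i \<in> I" "r \<in> carrier R" and x: "x \<in> carrier R" using pl_memE by metis
    have ic: "i \<in> carrier R" using a Ic by blast
    have e1: "x \<otimes> a = x \<otimes> i \<oplus> y \<otimes> (x \<otimes> r)" using a ic x y by (simp add: r_distr m_lcomm)
    have e2: "a \<otimes> x = i \<otimes> x \<oplus> y \<otimes> (r \<otimes> x)" using a ic x y by (simp add: l_distr m_assoc)
    show "x \<otimes> a \<in> pl R I y" using e1 pl_memI[where y=y, OF ideal.I_l_closed[OF I a(2) x] m_closed[OF x a(3)]] by simp
    show "a \<otimes> x \<in> pl R I y" using e2 pl_memI[where y=y, OF ideal.I_r_closed[OF I a(2) x] m_closed[OF a(3) x]] by simp
  qed
qed

lemma pl_sup: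
  assumes I: "ideal I R" and y: "y \<in> carrier R"
  shows "I \<subseteq> pl R I y" "y \<in> pl R I y"
proof -
  have Ic: "I \<subseteq> carrier R" using ideal_carr[OF I] .
  show "I \<subseteq> pl R I y"
  proof
    fix i assume iI: "i \<in> I" then have "i \<oplus> y \<otimes> \<zero> = i" using Ic y by (simp add: subsetD)
    then show "i \<in> pl R I y" using pl_memI[where y=y, OF iI zero_closed] by simp
  qed
  have "\<zero> \<oplus> y \<otimes> \<one> = y" using y by simp
  then show "y \<in> pl R I y"
    using pl_memI[where y=y, OF additive_subgroup.zero_closed[OF ideal.axioms(1)[OF I]] one_closed] by simp
qed

lemma pl_min:
  assumes J: "ideal J R" and IJ: "I \<subseteq> J" and yJ: "y \<in> J"
  shows "pl R I y \<subseteq> J"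
proof
  fix x assume "x \<in> pl R I y"
  then obtain i r where a: "x = i \<oplus> y \<otimes> r" "i \<in> I" "r \<in> carrier R" using pl_memE by metis
  have "y \<otimes> r \<in> J" using ideal.I_r_closed[OF J yJ a(3)] .
  moreover have "i \<in> J" using a IJ by blast
  ultimately show "x \<in> J" using a additive_subgroup.a_closed[OF ideal.axioms(1)[OF J]] by simp
qed

lemma colI_ideal:
  assumes I: "ideal I R" and y: "y \<in> carrier R"
  shows "ideal (colI R I y) R"
proof -
  have z: "\<zero> \<in> I" using additive_subgroup.zero_closed[OF ideal.axioms(1)[OF I]] .
  have ac: "\<And>a b. a \<in> I \<Longrightarrow> b \<in> I \<Longrightarrow> a \<oplus> b \<in> I" using additive_subgroup.a_closed[OF ideal.axioms(1)[OF I]] .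
  have ai: "\<And>a. a \<in> I \<Longrightarrow> \<ominus> a \<in> I" using additive_subgroup.a_inv_closed[OF ideal.axioms(1)[OF I]] .
  show ?thesis
    apply (rule idealI[OF ring_axioms], rule add.subgroupI)
  proof -
    show "colI R I y \<subseteq> carrier R" by (auto simp: colI_def)
    have "\<zero> \<in> colI R I y" using y z unfolding colI_def by auto
    then show "colI R I y \<noteq> {}" by blast
  next
    fix a assume a: "a \<in> colI R I y"
    then have "y \<otimes> (\<ominus> a) = \<ominus> (y \<otimes> a)" using y by (simp add: colI_def r_minus)
    then show "\<ominus> a \<in> colI R I y" using a ai unfolding colI_def by auto
  next
    fix a b assume a: "a \<in> colI R I y" and b: "b \<in> colI R I y"
    then have "y \<otimes> (a \<oplus> b) = y \<otimes> a \<oplus> y \<otimes> b" using y by (simp add: colI_def r_distr)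
    then show "a \<oplus> b \<in> colI R I y" using a b ac unfolding colI_def by auto
  next
    fix a x assume a: "a \<in> colI R I y" and x: "x \<in> carrier R"
    have ya: "y \<otimes> a \<in> I" "a \<in> carrier R" using a by (auto simp: colI_def)
    have "y \<otimes> (x \<otimes> a) = x \<otimes> (y \<otimes> a)" using ya x y by (simp add: m_lcomm)
    then show "x \<otimes> a \<in> colI R I y" using ya x ideal.I_l_closed[OF I] unfolding colI_def by auto
    have "y \<otimes> (a \<otimes> x) = (y \<otimes> a) \<otimes> x" using ya x y by (simp add: m_assoc)
    then show "a \<otimes> x \<in> colI R I y" using ya x ideal.I_r_closed[OF I] unfolding colI_def by auto
  qed
qed

end

definition chainI :: "('a, 'm) ring_scheme \<Rightarrow> 'a set \<Rightarrow> 'a set \<Rightarrow> nat \<Rightarrow> (nat \<Rightarrow> 'a set) \<Rightarrow> bool" where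
  "chainI R A B n C \<longleftrightarrow> C 0 = A \<and> C n = B \<and> (\<forall>i\<le>n. ideal (C i) R) \<and> (\<forall>i<n. C i \<subset> C (Suc i))"

definition len :: "('a, 'm) ring_scheme \<Rightarrow> 'a set \<Rightarrow> 'a set \<Rightarrow> enat" where
  "len R A B = Sup {enat n | n. \<exists>C. chainI R A B n C}"

lemma quot_length_len: "quot_length R I = len R I (carrier R)"
  unfolding quot_length_def len_def ideal_chain_def chainI_def by simp

lemma len_ge: "chainI R A B n C \<Longrightarrow> enat n \<le> len R A B"
  unfolding len_def by (rule Sup_upper) blast

lemma len_le: "(\<And>n C. chainI R A B n C \<Longrightarrow> enat n \<le> X) \<Longrightarrow> len R A B \<le> X"
  unfolding len_def by (rule Sup_least) blast

lemma nonstrict_chain: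
  assumes "\<forall>i\<le>n. ideal (D i) R" "\<forall>i<n. D i \<subseteq> D (Suc i)"
  shows "\<exists>C. chainI R (D 0) (D n) (card {i. i < n \<and> D i \<noteq> D (Suc i)}) C"
  using assms
proof (induction n)
  case 0
  show ?case by (rule exI[of _ "\<lambda>_. D 0"]) (use 0 in \<open>simp add: chainI_def\<close>)
next
  case (Suc n)
  then obtain C where C: "chainI R (D 0) (D n) (card {i. i < n \<and> D i \<noteq> D (Suc i)}) C" by auto
  show ?case
  proof (cases "D n = D (Suc n)")
    case True
    then have "{i. i < Suc n \<and> D i \<noteq> D (Suc i)} = {i. i < n \<and> D i \<noteq> D (Suc i)}"
      using less_Suc_eq by auto
    then show ?thesis using C True by metis
  next
    case False
    let ?S = "{i. i < n \<and> D i \<noteq> D (Suc i)}"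
    have e: "{i. i < Suc n \<and> D i \<noteq> D (Suc i)} = insert n ?S"
      using False less_Suc_eq by auto
    have "finite ?S" by simp
    then have cs: "card {i. i < Suc n \<and> D i \<noteq> D (Suc i)} = Suc (card ?S)" unfolding e by simp
    define s where "s = card ?S"
    have C': "C 0 = D 0" "C s = D n" "\<forall>i\<le>s. ideal (C i) R" "\<forall>i<s. C i \<subset> C (Suc i)"
      using C unfolding chainI_def s_def by auto
    have lt: "D n \<subset> D (Suc n)" using Suc.prems False by auto
    have "chainI R (D 0) (D (Suc n)) (Suc s) (C(Suc s := D (Suc n)))"
      unfolding chainI_def using C' lt Suc.prems
      by (auto simp: le_Suc_eq less_Suc_eq)
    then show ?thesis using cs s_def by metis
  qed
qed

lemma set_add_memI:
  fixes R (structure)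
  shows "h \<in> H \<Longrightarrow> k \<in> K \<Longrightarrow> h \<oplus> k \<in> H <+>\<^bsub>R\<^esub> K"
  unfolding set_add_def' by blast

lemma sum_absorb:
  fixes R (structure)
  assumes "ring R" "ideal A R" "ideal B R" "A \<subseteq> B"
  shows "A <+>\<^bsub>R\<^esub> B = B" "B <+>\<^bsub>R\<^esub> A = B"
proof -
  interpret ring R by fact
  have Bc: "B \<subseteq> carrier R" using ideal_carr[OF assms(3)] .
  have zA: "\<zero> \<in> A" using additive_subgroup.zero_closed[OF ideal.axioms(1)[OF assms(2)]] .
  have ac: "\<And>a b. a \<in> B \<Longrightarrow> b \<in> B \<Longrightarrow> a \<oplus> b \<in> B" using additive_subgroup.a_closed[OF ideal.axioms(1)[OF assms(3)]] .
  show "A <+>\<^bsub>R\<^esub> B = B"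
  proof
    show "A <+>\<^bsub>R\<^esub> B \<subseteq> B" using ac assms(4) by (auto simp: set_add_def')
    show "B \<subseteq> A <+>\<^bsub>R\<^esub> B"
    proof
      fix b assume b: "b \<in> B"
      then have "\<zero> \<oplus> b = b" using Bc by auto
      then show "b \<in> A <+>\<^bsub>R\<^esub> B" using set_add_memI[where R=R, OF zA b] by simp
    qed
  qed
  show "B <+>\<^bsub>R\<^esub> A = B"
  proof
    show "B <+>\<^bsub>R\<^esub> A \<subseteq> B" using ac assms(4) by (auto simp: set_add_def')
    show "B \<subseteq> B <+>\<^bsub>R\<^esub> A"
    proof
      fix b assume b: "b \<in> B"
      then have "b \<oplus> \<zero> = b" using Bc by auto
      then show "b \<in> B <+>\<^bsub>R\<^esub> A" using set_add_memI[where R=R, OF b zA] by simp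
    qed
  qed
qed

lemma card_two_sets:
  assumes "{..<(n::nat)} \<subseteq> S1 \<union> S2" "S1 \<subseteq> {..<n}" "S2 \<subseteq> {..<n}"
  shows "n \<le> card S1 + card S2"
proof -
  have f: "finite S1" "finite S2" using assms finite_subset by blast+
  have "n = card {..<n}" by simp
  also have "\<dots> \<le> card (S1 \<union> S2)" using assms f by (intro card_mono) auto
  also have "\<dots> \<le> card S1 + card S2" by (rule card_Un_le)
  finally show ?thesis .
qed

context cring begin

lemma len_split:
  assumes I: "ideal I R" and K: "ideal K R" and J: "ideal J R" and IK: "I \<subseteq> K" and KJ: "K \<subseteq> J"
  shows "len R I J \<le> len R I K + len R K J"
proof (rule len_le)
  fix n C assume C: "chainI R I J n C"
  have C0: "C 0 = I" and Cn: "C n = J" and Ci: "\<And>i. i \<le> n \<Longrightarrow> ideal (C i) R"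
    and Cs: "\<And>i. i < n \<Longrightarrow> C i \<subset> C (Suc i)" using C unfolding chainI_def by auto
  define D1 where "D1 i = C i \<inter> K" for i
  define D2 where "D2 i = C i <+>\<^bsub>R\<^esub> K" for i
  have D1i: "\<forall>i\<le>n. ideal (D1 i) R" unfolding D1_def using Ci K i_intersect by blast
  have D2i: "\<forall>i\<le>n. ideal (D2 i) R" unfolding D2_def using Ci K add_ideals by blast
  have D1m: "\<forall>i<n. D1 i \<subseteq> D1 (Suc i)" unfolding D1_def using Cs by blast
  have D2m: "\<forall>i<n. D2 i \<subseteq> D2 (Suc i)" unfolding D2_def using Cs by (auto simp: set_add_def')
  have D10: "D1 0 = I" "D1 n = K" unfolding D1_def using C0 Cn IK KJ by auto
  have D20: "D2 0 = K" "D2 n = J" unfolding D2_def using C0 Cn sum_absorb[OF ring_axioms I K IK] sum_absorb[OF ring_axioms K J KJ] by auto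
  obtain E1 where E1: "chainI R I K (card {i. i < n \<and> D1 i \<noteq> D1 (Suc i)}) E1"
    using nonstrict_chain[OF D1i D1m] D10 by metis
  obtain E2 where E2: "chainI R K J (card {i. i < n \<and> D2 i \<noteq> D2 (Suc i)}) E2"
    using nonstrict_chain[OF D2i D2m] D20 by metis
  have key: "D1 i \<noteq> D1 (Suc i) \<or> D2 i \<noteq> D2 (Suc i)" if i: "i < n" for i
  proof (rule ccontr)
    assume "\<not> ?thesis"
    then have e1: "D1 i = D1 (Suc i)" and e2: "D2 i = D2 (Suc i)" by auto
    have Cic: "C (Suc i) \<subseteq> carrier R" using ideal_carr Ci i by (meson Suc_leI)
    have Cii: "ideal (C i) R" "ideal (C (Suc i)) R" using Ci i by auto
    have "C (Suc i) \<subseteq> C i"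
    proof
      fix z assume z: "z \<in> C (Suc i)"
      have zK: "\<zero> \<in> K" using additive_subgroup.zero_closed[OF ideal.axioms(1)[OF K]] .
      have "z \<oplus> \<zero> = z" using z Cic by auto
      then have "z \<in> D2 (Suc i)" unfolding D2_def using set_add_memI[where R=R, OF z zK] by simp
      then have "z \<in> D2 i" using e2 by simp
      then obtain a k where a: "a \<in> C i" "k \<in> K" "z = a \<oplus> k" unfolding D2_def set_add_def' by blast
      have aS: "a \<in> C (Suc i)" using a(1) Cs[OF i] by blast
      have ac: "a \<in> carrier R" "k \<in> carrier R" using subsetD[OF ideal_carr[OF Cii(1)] a(1)] subsetD[OF ideal_carr[OF K] a(2)] by auto
      have "z \<ominus> a = (k \<oplus> a) \<oplus> \<ominus> a" using a(3) ac by (simp add: a_minus_def a_comm)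
      also have "\<dots> = k \<oplus> (a \<oplus> \<ominus> a)" using ac by (simp add: a_assoc)
      also have "\<dots> = k" using ac by (simp add: r_neg)
      finally have "z \<ominus> a = k" .
      then have "k \<in> C (Suc i)" using z aS additive_subgroup.a_closed[OF ideal.axioms(1)[OF Cii(2)]]
          additive_subgroup.a_inv_closed[OF ideal.axioms(1)[OF Cii(2)]] by (metis a_minus_def)
      then have "k \<in> D1 (Suc i)" unfolding D1_def using a by blast
      then have "k \<in> C i" using e1 unfolding D1_def by blast
      then show "z \<in> C i" using a additive_subgroup.a_closed[OF ideal.axioms(1)[OF Cii(1)]] by simp
    qed
    then show False using Cs[OF i] by blast
  qed
  have "n \<le> card {i. i < n \<and> D1 i \<noteq> D1 (Suc i)} + card {i. i < n \<and> D2 i \<noteq> D2 (Suc i)}"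
    by (rule card_two_sets) (use key in auto)
  then have "enat n \<le> enat (card {i. i < n \<and> D1 i \<noteq> D1 (Suc i)}) + enat (card {i. i < n \<and> D2 i \<noteq> D2 (Suc i)})"
    by simp
  also have "\<dots> \<le> len R I K + len R K J" using len_ge[OF E1] len_ge[OF E2] by (rule add_mono)
  finally show "enat n \<le> len R I K + len R K J" .
qed

end

lemma chain_mono:
  assumes "chainI R A B n C" "i \<le> j" "j \<le> n"
  shows "C i \<subseteq> C j"
  using assms(2,3)
proof (induction j)
  case 0 then show ?case by simp
next
  case (Suc j)
  have s: "C j \<subset> C (Suc j)" using assms(1) Suc.prems unfolding chainI_def by auto
  show ?case
  proof (cases "i = Suc j")
    case True then show ?thesis by simp
  next
    case False
    then have "i \<le> j" "j \<le> n" using Suc.prems by auto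
    then have "C i \<subseteq> C j" using Suc.IH by blast
    then show ?thesis using s by blast
  qed
qed

lemma chain_strict:
  assumes "chainI R A B n C" "0 < n"
  shows "A \<subset> B"
proof -
  have "C 0 \<subset> C 1" using assms unfolding chainI_def by auto
  moreover have "C 1 \<subseteq> C n" using chain_mono[OF assms(1), of 1 n] assms(2) by simp
  ultimately show ?thesis using assms(1) unfolding chainI_def by auto
qed

lemma len_refl: "len R A A = 0"
proof -
  have "len R A A \<le> 0"
  proof (rule len_le)
    fix n C assume C: "chainI R A A n C"
    show "enat n \<le> 0" using chain_strict[OF C] by (cases n) (auto simp: zero_enat_def)
  qed
  then show ?thesis by simp
qed

lemma len_mono_left:
  assumes K: "ideal K R" and KA: "K \<subseteq> A"
  shows "len R A B \<le> len R K B"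
proof (rule len_le)
  fix n C assume C: "chainI R A B n C"
  show "enat n \<le> len R K B"
  proof (cases "K = A")
    case True then show ?thesis using len_ge C by blast
  next
    case False
    define C' where "C' i = (if i = 0 then K else C (i - 1))" for i
    have C0: "C 0 = A" and Cn: "C n = B" and Ci: "\<And>i. i \<le> n \<Longrightarrow> ideal (C i) R"
      and Cs: "\<And>i. i < n \<Longrightarrow> C i \<subset> C (Suc i)" using C unfolding chainI_def by auto
    have "chainI R K B (Suc n) C'"
      unfolding chainI_def
    proof (intro conjI allI impI)
      show "C' 0 = K" by (simp add: C'_def)
      show "C' (Suc n) = B" by (simp add: C'_def Cn)
      fix i
      show "i \<le> Suc n \<Longrightarrow> ideal (C' i) R"
        by (cases i) (auto simp: C'_def K Ci)
      assume i: "i < Suc n"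
      show "C' i \<subset> C' (Suc i)"
      proof (cases i)
        case 0 then show ?thesis using KA False C0 by (auto simp: C'_def)
      next
        case (Suc k) then show ?thesis using Cs[of k] i by (simp add: C'_def)
      qed
    qed
    then have "enat (Suc n) \<le> len R K B" by (rule len_ge)
    moreover have "enat n \<le> enat (Suc n)" by simp
    ultimately show ?thesis by (rule order_trans[rotated])
  qed
qed

context cring begin

lemma len_colon:
  assumes L: "ideal L R" and y: "y \<in> carrier R"
  shows "len R L (pl R L y) \<le> len R (colI R L y) (carrier R)"
proof (rule len_le)
  fix n C assume C: "chainI R L (pl R L y) n C"
  have C0: "C 0 = L" and Cn: "C n = pl R L y" and Ci: "\<And>i. i \<le> n \<Longrightarrow> ideal (C i) R"
    and Cs: "\<And>i. i < n \<Longrightarrow> C i \<subset> C (Suc i)" using C unfolding chainI_def by auto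
  define D where "D i = colI R (C i) y" for i
  have "chainI R (colI R L y) (carrier R) n D"
    unfolding chainI_def
  proof (intro conjI allI impI)
    show "D 0 = colI R L y" using C0 D_def by simp
    show "D n = carrier R"
    proof
      show "D n \<subseteq> carrier R" by (auto simp: D_def colI_def)
      show "carrier R \<subseteq> D n"
      proof
        fix r assume r: "r \<in> carrier R"
        have zL: "\<zero> \<in> L" using additive_subgroup.zero_closed[OF ideal.axioms(1)[OF L]] .
        have "\<zero> \<oplus> y \<otimes> r = y \<otimes> r" using r y by simp
        then have "y \<otimes> r \<in> pl R L y" using pl_memI[where y=y, OF zL r] by simp
        then show "r \<in> D n" using r Cn by (simp add: D_def colI_def)
      qed
    qed
    fix i
    show "i \<le> n \<Longrightarrow> ideal (D i) R" unfolding D_def using Ci colI_ideal y by blast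
    assume i: "i < n"
    have sub: "C i \<subseteq> C (Suc i)" using Cs[OF i] by blast
    then have "D i \<subseteq> D (Suc i)" unfolding D_def colI_def by blast
    moreover have "D i \<noteq> D (Suc i)"
    proof -
      obtain z where z: "z \<in> C (Suc i)" "z \<notin> C i" using Cs[OF i] by blast
      have "C (Suc i) \<subseteq> C n" using chain_mono[OF C, of "Suc i" n] i by simp
      then have "z \<in> pl R L y" using z Cn by blast
      then obtain l r where zr: "z = l \<oplus> y \<otimes> r" "l \<in> L" "r \<in> carrier R" using pl_memE by metis
      have LCi: "L \<subseteq> C i" using chain_mono[OF C, of 0 i] i C0 by simp
      have lS: "l \<in> C (Suc i)" using LCi sub zr by blast
      have Cii: "ideal (C i) R" "ideal (C (Suc i)) R" using Ci i by auto
      have lc: "l \<in> carrier R" using subsetD[OF ideal_carr[OF L] zr(2)] .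
      have yr: "y \<otimes> r \<in> carrier R" using y zr by simp
      have "\<ominus> l \<oplus> z = (\<ominus> l \<oplus> l) \<oplus> y \<otimes> r" using zr(1) lc yr by (simp add: a_assoc)
      also have "\<dots> = y \<otimes> r" using lc yr by (simp add: l_neg)
      finally have e: "\<ominus> l \<oplus> z = y \<otimes> r" .
      have "\<ominus> l \<oplus> z \<in> C (Suc i)" using z(1) lS additive_subgroup.a_closed[OF ideal.axioms(1)[OF Cii(2)]]
          additive_subgroup.a_inv_closed[OF ideal.axioms(1)[OF Cii(2)]] by blast
      then have "r \<in> D (Suc i)" using e zr(3) by (simp add: D_def colI_def)
      moreover have "r \<notin> D i"
      proof
        assume "r \<in> D i"
        then have "y \<otimes> r \<in> C i" by (simp add: D_def colI_def)
        then have "l \<oplus> y \<otimes> r \<in> C i" using zr(2) LCi additive_subgroup.a_closed[OF ideal.axioms(1)[OF Cii(1)]] by blast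
        then show False using z zr by simp
      qed
      ultimately show ?thesis by blast
    qed
    ultimately show "D i \<subset> D (Suc i)" by blast
  qed
  then show "enat n \<le> len R (colI R L y) (carrier R)" by (rule len_ge)
qed

lemma len_filtration:
  assumes "\<forall>i\<le>p. ideal (E i) R" "\<forall>i<p. E i \<subseteq> E (Suc i)" "\<forall>i<p. len R (E i) (E (Suc i)) \<le> q"
  shows "len R (E 0) (E p) \<le> enat p * q \<and> E 0 \<subseteq> E p"
  using assms
proof (induction p)
  case 0 then show ?case by (simp add: len_refl)
next
  case (Suc p)
  then have IH: "len R (E 0) (E p) \<le> enat p * q" "E 0 \<subseteq> E p" by auto
  have "len R (E 0) (E (Suc p)) \<le> len R (E 0) (E p) + len R (E p) (E (Suc p))"
    using Suc.prems IH(2) by (intro len_split) auto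
  also have "\<dots> \<le> enat p * q + q" using IH(1) Suc.prems(3) by (intro add_mono) auto
  also have "\<dots> = enat (Suc p) * q"
    by (metis add.commute eSuc_enat mult_eSuc iadd_Suc mult.commute)
  finally show ?case using IH(2) Suc.prems(2) by auto
qed

end

locale nlr = cring R + noetherian_ring R for R (structure) +
  fixes m
  assumes m_max: "maximalideal m R" and m_uniq: "\<And>M. maximalideal M R \<Longrightarrow> M = m"
begin

lemma m_ideal: "ideal m R" using m_max maximalideal.axioms(1) by blast
lemma m_proper: "m \<noteq> carrier R" using m_max maximalideal.I_notcarr by metis
lemma m_carr: "m \<subseteq> carrier R" using ideal_carr[OF m_ideal] .
lemma one_notin_m: "\<one> \<notin> m" using ideal.one_imp_carrier[OF m_ideal] m_proper by blast

lemma wf_ideals: "wf {(J, I). ideal I R \<and> ideal J R \<and> I \<subset> J}"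
proof (rule wf_iff_no_infinite_down_chain[THEN iffD2], rule notI)
  assume "\<exists>f. \<forall>i. (f (Suc i), f i) \<in> {(J, I). ideal I R \<and> ideal J R \<and> I \<subset> J}"
  then obtain f where f0: "\<forall>i. ideal (f i) R \<and> ideal (f (Suc i)) R \<and> f i \<subset> f (Suc i)" by auto
  then have f: "\<And>i. ideal (f i) R" "\<And>i. f i \<subset> f (Suc i)" by auto
  have mono: "f i \<subseteq> f j" if "i \<le> j" for i j
    using that
  proof (induction j)
    case 0 then show ?case by simp
  next
    case (Suc j)
    show ?case
    proof (cases "i = Suc j")
      case True then show ?thesis by simp
    next
      case False then have "i \<le> j" using Suc.prems by simp
      then show ?thesis using Suc.IH f(2)[of j] by blast
    qed
  qed
  have ch: "subset.chain {I. ideal I R} (range f)"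
    unfolding subset_chain_def
  proof (intro conjI ballI)
    show "range f \<subseteq> {I. ideal I R}" using f(1) by blast
    fix x y assume "x \<in> range f" "y \<in> range f"
    then obtain i j where "x = f i" "y = f j" by blast
    then show "x \<subseteq> y \<or> y \<subseteq> x" using mono[of i j] mono[of j i] by (cases "i \<le> j") auto
  qed
  have "\<Union>(range f) \<in> range f" by (rule ideal_chain_is_trivial) (use ch in auto)
  then obtain k where k: "\<Union>(range f) = f k" by blast
  have "f (Suc k) \<subseteq> f k" using k by blast
  then show False using f(2)[of k] by blast
qed

lemma proper_in_m:
  assumes I: "ideal I R" and Ip: "I \<noteq> carrier R"
  shows "I \<subseteq> m"
proof -
  let ?S = "{J. ideal J R \<and> J \<noteq> carrier R \<and> I \<subseteq> J}"
  have "I \<in> ?S" using I Ip by blast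
  then obtain J where J: "J \<in> ?S" and min: "\<And>J'. (J', J) \<in> {(J, I). ideal I R \<and> ideal J R \<and> I \<subset> J} \<Longrightarrow> J' \<notin> ?S"
    using wfE_min[OF wf_ideals \<open>I \<in> ?S\<close>] by blast
  have "maximalideal J R"
  proof (rule maximalidealI)
    show "ideal J R" using J by blast
    show "carrier R \<noteq> J" using J by blast
    fix J' assume J': "ideal J' R" "J \<subseteq> J'" "J' \<subseteq> carrier R"
    show "J' = J \<or> J' = carrier R"
    proof (rule ccontr)
      assume "\<not> ?thesis"
      then have "J \<subset> J'" "J' \<noteq> carrier R" using J' by auto
      then have "J' \<in> ?S" "(J', J) \<in> {(J, I). ideal I R \<and> ideal J R \<and> I \<subset> J}" using J J' by auto
      then show False using min by blast
    qed
  qed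
  then have "J = m" by (rule m_uniq)
  then show ?thesis using J by blast
qed

lemma unit_of_notin_m:
  assumes x: "x \<in> carrier R" and xm: "x \<notin> m"
  shows "x \<in> Units R"
proof -
  have P: "ideal (PIdl x) R" using cgenideal_ideal[OF x] .
  have "x \<in> PIdl x" using cgenideal_self[OF x] .
  then have "PIdl x = carrier R" using proper_in_m[OF P] xm by blast
  then have "\<one> \<in> PIdl x" by simp
  then obtain r where r: "r \<in> carrier R" "\<one> = r \<otimes> x" unfolding cgenideal_def by blast
  then show ?thesis unfolding Units_def using x m_comm by auto
qed

lemma unit_one_minus:
  assumes x: "x \<in> m" and r: "r \<in> carrier R"
  shows "\<one> \<ominus> x \<otimes> r \<in> Units R"
proof (rule unit_of_notin_m)
  have xc: "x \<in> carrier R" using x m_carr by blast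
  show "\<one> \<ominus> x \<otimes> r \<in> carrier R" using xc r by simp
  show "\<one> \<ominus> x \<otimes> r \<notin> m"
  proof
    assume a: "\<one> \<ominus> x \<otimes> r \<in> m"
    have "x \<otimes> r \<in> m" using ideal.I_r_closed[OF m_ideal x r] .
    then have "(\<one> \<ominus> x \<otimes> r) \<oplus> x \<otimes> r \<in> m"
      using a additive_subgroup.a_closed[OF ideal.axioms(1)[OF m_ideal]] by blast
    moreover have "(\<one> \<ominus> x \<otimes> r) \<oplus> x \<otimes> r = \<one>" using xc r
      by (simp add: a_minus_def a_assoc l_neg)
    ultimately show False using one_notin_m by simp
  qed
qed

lemma unit_in_ideal:
  assumes I: "ideal I R" and u: "u \<in> Units R" "u \<in> I"
  shows "I = carrier R"
proof -
  have "inv u \<otimes> u \<in> I" using ideal.I_l_closed[OF I u(2) Units_inv_closed[OF u(1)]] .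
  then have "\<one> \<in> I" using u(1) by simp
  then show ?thesis using ideal.one_imp_carrier[OF I] by blast
qed

lemma len_m: "len R m (carrier R) \<le> 1"
proof (rule len_le)
  fix n C assume C: "chainI R m (carrier R) n C"
  show "enat n \<le> 1"
  proof (rule ccontr)
    assume "\<not> enat n \<le> 1"
    then have n: "2 \<le> n" by (simp add: one_enat_def)
    have C0: "C 0 = m" and Cn: "C n = carrier R" and Cs: "\<forall>i<n. C i \<subset> C (Suc i)"
      and Cid: "\<forall>i\<le>n. ideal (C i) R" using C unfolding chainI_def by auto
    have Ci: "ideal (C 1) R" using Cid n by simp
    have s1: "C 0 \<subset> C 1" using spec[OF Cs, of 0] n by simp
    have s2: "C 1 \<subset> C 2" using spec[OF Cs, of 1] n by (simp add: numeral_2_eq_2)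
    have "C 2 \<subseteq> C n" using chain_mono[OF C, of 2 n] n by simp
    then have "C 1 \<subseteq> carrier R" "C 1 \<noteq> carrier R" using s2 Cn by auto
    then have "C 1 = m \<or> C 1 = carrier R" using maximalideal.I_maximal[OF m_max Ci] s1 C0 by blast
    then show False using s1 C0 \<open>C 1 \<noteq> carrier R\<close> by blast
  qed
qed

lemma exists_step:
  assumes I: "ideal I R" and x: "x \<in> carrier R" and xI: "x \<notin> I" and k: "x [^] (k::nat) \<in> I"
  shows "\<exists>j::nat. x [^] j \<notin> I \<and> x [^] (Suc j) \<in> I"
  using k
proof (induction k)
  case 0
  then have "\<one> \<in> I" by simp
  then have "I = carrier R" using ideal.one_imp_carrier[OF I] by blast
  then show ?case using x xI by blast
next
  case (Suc k)
  then show ?case by blast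
qed

lemma finite_len:
  assumes Q: "ideal Q R" and Qm: "Q \<subseteq> m" and rad: "\<And>x. x \<in> m \<Longrightarrow> \<exists>k::nat. x [^] k \<in> Q"
  shows "len R Q (carrier R) < \<infinity>"
proof -
  have main: "len R I (carrier R) < \<infinity>" if "ideal I R" "Q \<subseteq> I" for I
    using that
  proof (induction I rule: wf_induct_rule[OF wf_ideals])
    case (1 I)
    have IH: "\<And>J. I \<subset> J \<Longrightarrow> ideal J R \<Longrightarrow> Q \<subseteq> J \<Longrightarrow> len R J (carrier R) < \<infinity>"
      using 1 by blast
    have I: "ideal I R" and QI: "Q \<subseteq> I" using 1 by auto
    show ?case
      proof (cases "I = carrier R")
        case True then show ?thesis by (simp add: len_refl)
      next
        case False
        then have Im: "I \<subseteq> m" using proper_in_m[OF I] by blast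
        show ?thesis
        proof (cases "I = m")
          case True then show ?thesis using len_m
            by (metis enat_ord_simps(4) infinity_ne_i1 one_enat_def order_le_less_trans enat_ord_simps(2) less_infinityE not_le)
        next
          case False
          then obtain x where x: "x \<in> m" "x \<notin> I" using Im by blast
          have xc: "x \<in> carrier R" using x m_carr by blast
          obtain k :: nat where "x [^] k \<in> Q" using rad[OF x(1)] by blast
          then have "x [^] k \<in> I" using QI by blast
          then obtain j where j: "x [^] j \<notin> I" "x [^] (Suc j) \<in> I" using exists_step[OF I xc x(2)] by blast
          define y where "y = x [^] j"
          have yc: "y \<in> carrier R" using xc by (simp add: y_def)
          have yx: "y \<otimes> x \<in> I" using j(2) by (simp add: y_def)
          have Ic: "I \<subseteq> carrier R" using ideal_carr[OF I] .
          have col: "ideal (colI R I y) R" using colI_ideal[OF I yc] .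
          have Icol: "I \<subseteq> colI R I y" using Ic ideal.I_l_closed[OF I] yc by (auto simp: colI_def)
          have xcol: "x \<in> colI R I y" using yx xc by (simp add: colI_def)
          have "I \<subset> colI R I y" using Icol xcol x(2) by blast
          then have c1: "len R (colI R I y) (carrier R) < \<infinity>"
            using IH col QI Icol by blast
          have pli: "ideal (pl R I y) R" using pl_ideal[OF I yc] .
          have Ipl: "I \<subseteq> pl R I y" "y \<in> pl R I y" using pl_sup[OF I yc] by auto
          have "I \<subset> pl R I y" using Ipl j(1) y_def by blast
          then have c2: "len R (pl R I y) (carrier R) < \<infinity>"
            using IH pli QI Ipl by blast
          have "len R I (carrier R) \<le> len R I (pl R I y) + len R (pl R I y) (carrier R)"
            using len_split[OF I pli oneideal Ipl(1) ideal_carr[OF pli]] .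
          also have "\<dots> \<le> len R (colI R I y) (carrier R) + len R (pl R I y) (carrier R)"
            using len_colon[OF I yc] by (rule add_right_mono)
          also have "\<dots> < \<infinity>" using c1 c2 by (auto elim!: less_infinityE)
          finally show ?thesis .
        qed
      qed
  qed
  then show ?thesis using Q by blast
qed

end

context nlr begin

lemma nak:
  assumes J: "ideal J R" and a: "a \<in> carrier R" and t: "t \<in> m" and c: "c \<in> J"
    and e: "a = c \<oplus> a \<otimes> t"
  shows "a \<in> J"
proof -
  have tc: "t \<in> carrier R" using t m_carr by blast
  have cc: "c \<in> carrier R" using c ideal_carr[OF J] by blast
  have u: "\<one> \<ominus> t \<in> Units R" using unit_one_minus[OF t one_closed] tc by simp
  have at: "a \<otimes> t \<in> carrier R" using a tc by simp
  have "a \<otimes> (\<one> \<ominus> t) = a \<oplus> \<ominus> (a \<otimes> t)" using a tc by (simp add: a_minus_def r_distr r_minus)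
  also have "\<dots> = (c \<oplus> a \<otimes> t) \<oplus> \<ominus> (a \<otimes> t)" using e by simp
  also have "\<dots> = c \<oplus> (a \<otimes> t \<oplus> \<ominus> (a \<otimes> t))" using cc at by (simp add: a_assoc)
  also have "\<dots> = c" using cc at by (simp add: r_neg)
  finally have e2: "a \<otimes> (\<one> \<ominus> t) = c" .
  have "a = a \<otimes> ((\<one> \<ominus> t) \<otimes> inv (\<one> \<ominus> t))" using u a by simp
  also have "\<dots> = (a \<otimes> (\<one> \<ominus> t)) \<otimes> inv (\<one> \<ominus> t)" using u a tc by (simp add: m_assoc)
  also have "\<dots> = c \<otimes> inv (\<one> \<ominus> t)" using e2 by simp
  finally show ?thesis using ideal.I_r_closed[OF J c Units_inv_closed[OF u]] by simp
qed

lemma len_geI: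
  assumes "\<And>N. enat N \<le> X" shows "X = \<infinity>"
proof (cases X)
  case (enat n)
  then have "enat (Suc n) \<le> enat n" using assms by metis
  then show ?thesis by simp
qed simp

lemma primary_of_finite:
  assumes Q: "ideal Q R" and Qm: "Q \<subseteq> m" and fin: "len R Q (carrier R) < \<infinity>"
  shows "P_primary R m Q"
proof -
  have rad: "\<exists>k::nat. x [^] k \<in> Q" if x: "x \<in> m" for x
  proof (rule ccontr)
    assume no: "\<not> ?thesis"
    have xc: "x \<in> carrier R" using x m_carr by blast
    define G where "G k = pl R Q (x [^] (k::nat))" for k
    have Gi: "ideal (G k) R" for k unfolding G_def using pl_ideal[OF Q] xc by simp
    have QG: "Q \<subseteq> G k" for k unfolding G_def using pl_sup[OF Q] xc by simp
    have xG: "x [^] k \<in> G k" for k unfolding G_def using pl_sup[OF Q] xc by simp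
    have dec: "G (Suc k) \<subset> G k" for k
    proof
      have "x [^] Suc k = x [^] k \<otimes> x" by simp
      then have "x [^] Suc k \<in> G k" using ideal.I_r_closed[OF Gi xG xc] by simp
      then show sub: "G (Suc k) \<subseteq> G k" unfolding G_def[of "Suc k"] using pl_min[OF Gi QG] by blast
      show "G (Suc k) \<noteq> G k"
      proof
        assume "G (Suc k) = G k"
        then have "x [^] k \<in> pl R Q (x [^] Suc k)" using xG G_def by simp
        then have "\<exists>q r. x [^] k = q \<oplus> x [^] Suc k \<otimes> r \<and> q \<in> Q \<and> r \<in> carrier R"
          by (rule pl_memE)
        then obtain q r where qr: "x [^] k = q \<oplus> x [^] Suc k \<otimes> r" "q \<in> Q" "r \<in> carrier R"
          by blast
        have xe: "x [^] Suc k \<otimes> r = x [^] k \<otimes> (x \<otimes> r)" using xc qr(3) nat_pow_closed[OF xc, of k]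
          by (simp only: nat_pow_Suc m_assoc)
        have "x [^] k = q \<oplus> x [^] k \<otimes> (x \<otimes> r)" unfolding xe[symmetric] by (rule qr(1))
        then have "x [^] k \<in> Q" by (rule nak[OF Q nat_pow_closed[OF xc] ideal.I_r_closed[OF m_ideal x qr(3)] qr(2)])
        then show False using no by blast
      qed
    qed
    have G0: "G 0 = carrier R"
    proof
      show "G 0 \<subseteq> carrier R" using ideal_carr[OF Gi] .
      show "carrier R \<subseteq> G 0"
      proof
        fix r assume r: "r \<in> carrier R"
        have "\<zero> \<in> Q" using additive_subgroup.zero_closed[OF ideal.axioms(1)[OF Q]] .
        then have "\<zero> \<oplus> \<one> \<otimes> r \<in> G 0" unfolding G_def using pl_memI[OF _ r] by simp
        then show "r \<in> G 0" using r by simp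
      qed
    qed
    have "enat N \<le> len R Q (carrier R)" for N
    proof -
      define C where "C i = G (N - i)" for i
      have "chainI R (G N) (carrier R) N C"
        unfolding chainI_def C_def
      proof (intro conjI allI impI)
        show "G (N - 0) = G N" by simp
        show "G (N - N) = carrier R" using G0 by simp
        fix i show "ideal (G (N - i)) R" using Gi by blast
        assume i: "i < N"
        then have "N - i = Suc (N - Suc i)" by simp
        then show "G (N - i) \<subset> G (N - Suc i)" using dec by simp
      qed
      then have "enat N \<le> len R (G N) (carrier R)" by (rule len_ge)
      also have "\<dots> \<le> len R Q (carrier R)" using len_mono_left[OF Q QG] .
      finally show ?thesis .
    qed
    then have "len R Q (carrier R) = \<infinity>" by (rule len_geI)
    then show False using fin by simp
  qed
  have Qp: "Q \<noteq> carrier R" using Qm m_proper m_carr by blast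
  have radeq: "radical R Q = m"
  proof
    show "m \<subseteq> radical R Q" using rad m_carr unfolding radical_def by blast
    show "radical R Q \<subseteq> m"
    proof
      fix x assume "x \<in> radical R Q"
      then obtain n :: nat where x: "x \<in> carrier R" "x [^] n \<in> Q" unfolding radical_def by blast
      show "x \<in> m"
      proof (rule ccontr)
        assume "x \<notin> m"
        then have "x \<in> Units R" using unit_of_notin_m x by blast
        then have "x [^] n \<in> Units R" by (rule Units_pow_closed)
        then have "m = carrier R" using unit_in_ideal[OF m_ideal] x Qm by blast
        then show False using m_proper by blast
      qed
    qed
  qed
  show ?thesis unfolding P_primary_def primary_ideal_def
  proof (intro conjI ballI impI Q Qp radeq)
    fix a b assume a: "a \<in> carrier R" and b: "b \<in> carrier R" and ab: "a \<otimes> b \<in> Q"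
    show "a \<in> Q \<or> (\<exists>n::nat. b [^] n \<in> Q)"
    proof (cases "b \<in> m")
      case True then show ?thesis using rad by blast
    next
      case False
      then have u: "b \<in> Units R" using unit_of_notin_m b by blast
      have "(a \<otimes> b) \<otimes> inv b = a" using a b u by (simp add: m_assoc)
      then show ?thesis using ideal.I_r_closed[OF Q ab Units_inv_closed[OF u]] by simp
    qed
  qed
qed

end

lemma chain_insert:
  assumes C: "chainI R A B n C" and i: "i < n" and J: "ideal J R" and s1: "C i \<subset> J" and s2: "J \<subset> C (Suc i)"
  shows "chainI R A B (Suc n) (\<lambda>j. if j \<le> i then C j else if j = Suc i then J else C (j - 1))"
proof -
  have C0: "C 0 = A" and Cn: "C n = B" and Ci: "\<And>j. j \<le> n \<Longrightarrow> ideal (C j) R"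
    and Cs: "\<And>j. j < n \<Longrightarrow> C j \<subset> C (Suc j)" using C unfolding chainI_def by auto
  show ?thesis unfolding chainI_def
  proof (intro conjI allI impI)
    show "(if 0 \<le> i then C 0 else if 0 = Suc i then J else C (0 - 1)) = A" using C0 by simp
    show "(if Suc n \<le> i then C (Suc n) else if Suc n = Suc i then J else C (Suc n - 1)) = B"
      using i Cn by simp
    fix j
    show "j \<le> Suc n \<Longrightarrow> ideal (if j \<le> i then C j else if j = Suc i then J else C (j - 1)) R"
      using Ci J i by auto
    assume j: "j < Suc n"
    show "(if j \<le> i then C j else if j = Suc i then J else C (j - 1))
        \<subset> (if Suc j \<le> i then C (Suc j) else if Suc j = Suc i then J else C (Suc j - 1))"
    proof (cases "j < i")
      case True then show ?thesis using Cs[of j] i by simp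
    next
      case False
      show ?thesis
      proof (cases "j = i")
        case True then show ?thesis using s1 by simp
      next
        case False2: False
        show ?thesis
        proof (cases "j = Suc i")
          case True then show ?thesis using s2 by simp
        next
          case False3: False
          then have "Suc i < j" using False False2 by simp
          then obtain k where k: "j = Suc k" "i < k" by (cases j) auto
          have "k < n" using j k by simp
          then show ?thesis using Cs[of k] k by simp
        qed
      qed
    qed
  qed
qed

lemma one_in_ideal:
  fixes R (structure)
  assumes "ideal J R" "\<one> \<in> J" shows "J = carrier R"
  using ideal.one_imp_carrier assms by blast

lemma vimage_ideal:
  assumes B: "cring B" and C: "cring C" and v: "v \<in> ring_hom B C" and J: "ideal J C"
  shows "ideal {b \<in> carrier B. v b \<in> J} B"
proof -
  interpret B: cring B by fact
  interpret C: cring C by fact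
  have z: "\<zero>\<^bsub>C\<^esub> \<in> J" using additive_subgroup.zero_closed[OF ideal.axioms(1)[OF J]] .
  have ac: "\<And>a b. a \<in> J \<Longrightarrow> b \<in> J \<Longrightarrow> a \<oplus>\<^bsub>C\<^esub> b \<in> J" using additive_subgroup.a_closed[OF ideal.axioms(1)[OF J]] .
  have ai: "\<And>a. a \<in> J \<Longrightarrow> \<ominus>\<^bsub>C\<^esub> a \<in> J" using additive_subgroup.a_inv_closed[OF ideal.axioms(1)[OF J]] .
  interpret h: ring_hom_ring B C v using v by (intro ring_hom_ringI2) (auto simp: B.ring_axioms C.ring_axioms)
  show ?thesis
    apply (rule idealI[OF B.ring_axioms], rule B.add.subgroupI)
  proof -
    show "{b \<in> carrier B. v b \<in> J} \<subseteq> carrier B" by blast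
    have "\<zero>\<^bsub>B\<^esub> \<in> {b \<in> carrier B. v b \<in> J}" using z by simp
    then show "{b \<in> carrier B. v b \<in> J} \<noteq> {}" by blast
  next
    fix a assume a: "a \<in> {b \<in> carrier B. v b \<in> J}"
    then show "\<ominus>\<^bsub>B\<^esub> a \<in> {b \<in> carrier B. v b \<in> J}" using ai by simp
  next
    fix a b assume a: "a \<in> {b \<in> carrier B. v b \<in> J}" and b: "b \<in> {b \<in> carrier B. v b \<in> J}"
    then show "a \<oplus>\<^bsub>B\<^esub> b \<in> {b \<in> carrier B. v b \<in> J}" using ac by simp
  next
    fix a x assume a: "a \<in> {b \<in> carrier B. v b \<in> J}" and x: "x \<in> carrier B"
    show "x \<otimes>\<^bsub>B\<^esub> a \<in> {b \<in> carrier B. v b \<in> J}" using a x ideal.I_l_closed[OF J] by simp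
    show "a \<otimes>\<^bsub>B\<^esub> x \<in> {b \<in> carrier B. v b \<in> J}" using a x ideal.I_r_closed[OF J] by simp
  qed
qed

lemma Idl_comp:
  assumes B: "cring B" and C: "cring C" and v: "v \<in> ring_hom B C" and X: "X \<subseteq> carrier B"
  shows "Idl\<^bsub>C\<^esub> (v ` (Idl\<^bsub>B\<^esub> X)) = Idl\<^bsub>C\<^esub> (v ` X)"
proof -
  interpret B: cring B by fact
  interpret C: cring C by fact
  have vc: "v ` Y \<subseteq> carrier C" if "Y \<subseteq> carrier B" for Y using that ring_hom_closed[OF v] by blast
  have IX: "Idl\<^bsub>B\<^esub> X \<subseteq> carrier B" using ideal_carr[OF B.genideal_ideal[OF X]] .
  have J: "ideal (Idl\<^bsub>C\<^esub> (v ` X)) C" using C.genideal_ideal[OF vc[OF X]] .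
  have "Idl\<^bsub>B\<^esub> X \<subseteq> {b \<in> carrier B. v b \<in> Idl\<^bsub>C\<^esub> (v ` X)}"
    using B.genideal_minimal[OF vimage_ideal[OF B C v J]] C.genideal_self[OF vc[OF X]] X by blast
  then have "v ` (Idl\<^bsub>B\<^esub> X) \<subseteq> Idl\<^bsub>C\<^esub> (v ` X)" by blast
  then have 1: "Idl\<^bsub>C\<^esub> (v ` (Idl\<^bsub>B\<^esub> X)) \<subseteq> Idl\<^bsub>C\<^esub> (v ` X)" using C.genideal_minimal[OF J] by blast
  have "v ` X \<subseteq> v ` (Idl\<^bsub>B\<^esub> X)" using B.genideal_self[OF X] by blast
  also have "\<dots> \<subseteq> Idl\<^bsub>C\<^esub> (v ` (Idl\<^bsub>B\<^esub> X))" using C.genideal_self[OF vc[OF IX]] .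
  finally have 2: "Idl\<^bsub>C\<^esub> (v ` X) \<subseteq> Idl\<^bsub>C\<^esub> (v ` (Idl\<^bsub>B\<^esub> X))"
    using C.genideal_minimal[OF C.genideal_ideal[OF vc[OF IX]]] by blast
  show ?thesis using 1 2 by blast
qed

context nlr begin

lemma len_attained:
  assumes I: "ideal I R" and p: "len R I (carrier R) = enat p"
  shows "\<exists>C. chainI R I (carrier R) p C"
proof -
  let ?A = "{enat n | n. \<exists>C. chainI R I (carrier R) n C}"
  have ne: "?A \<noteq> {}"
  proof (cases "I = carrier R")
    case True
    then have "chainI R I (carrier R) 0 (\<lambda>_. carrier R)" by (simp add: chainI_def oneideal)
    then show ?thesis by blast
  next
    case False
    then have "I \<subset> carrier R" using ideal_carr[OF I] by blast
    then have "chainI R I (carrier R) 1 (\<lambda>i. if i = 0 then I else carrier R)"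
      using I by (auto simp: chainI_def oneideal)
    then show ?thesis by blast
  qed
  have S: "Sup ?A = enat p" using p unfolding len_def .
  then have fin: "finite ?A" using ne unfolding Sup_enat_def by (auto split: if_splits)
  then have "Max ?A = enat p" using S ne cSup_eq_Max[OF fin ne] by simp
  then have "enat p \<in> ?A" using Max_in[OF fin ne] by simp
  then show ?thesis by auto
qed

end

lemma submult:
  assumes B: "nlr B mB" and C: "cring C" and v: "v \<in> ring_hom B C"
    and I: "ideal I B" and p: "len B I (carrier B) = enat p"
  shows "len C (Idl\<^bsub>C\<^esub> (v ` I)) (carrier C) \<le> enat p * len C (Idl\<^bsub>C\<^esub> (v ` mB)) (carrier C)"
proof -
  interpret B: nlr B mB by fact
  interpret C: cring C by fact
  interpret h: ring_hom_ring B C v using v by (intro ring_hom_ringI2) (auto simp: B.ring_axioms C.ring_axioms)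
  let ?q = "len C (Idl\<^bsub>C\<^esub> (v ` mB)) (carrier C)"
  obtain Ch where Ch: "chainI B I (carrier B) p Ch" using B.len_attained[OF I p] by blast
  have Ch0: "Ch 0 = I" and Chp: "Ch p = carrier B" and Chi: "\<And>j. j \<le> p \<Longrightarrow> ideal (Ch j) B"
    and Chs: "\<And>j. j < p \<Longrightarrow> Ch j \<subset> Ch (Suc j)" using Ch unfolding chainI_def by auto
  have vc: "v ` Y \<subseteq> carrier C" if "Y \<subseteq> carrier B" for Y using that ring_hom_closed[OF v] by blast
  have Chc: "Ch j \<subseteq> carrier B" if "j \<le> p" for j using ideal_carr[OF Chi[OF that]] .
  define E where "E j = Idl\<^bsub>C\<^esub> (v ` Ch j)" for j
  have Ei: "ideal (E j) C" if "j \<le> p" for j unfolding E_def using C.genideal_ideal[OF vc[OF Chc[OF that]]] .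
  have Eself: "v ` Ch j \<subseteq> E j" if "j \<le> p" for j unfolding E_def using C.genideal_self[OF vc[OF Chc[OF that]]] .
  have Emono: "E j \<subseteq> E (Suc j)" if j: "j < p" for j
  proof -
    have "v ` Ch j \<subseteq> E (Suc j)" using Eself[of "Suc j"] Chs[OF j] j by auto
    then show ?thesis unfolding E_def[of j] using C.genideal_minimal[OF Ei[of "Suc j"]] j by simp
  qed
  have E0: "E 0 = Idl\<^bsub>C\<^esub> (v ` I)" unfolding E_def using Ch0 by simp
  have Ep: "E p = carrier C"
  proof -
    have "v \<one>\<^bsub>B\<^esub> \<in> E p" using Eself[of p] Chp B.one_closed by blast
    then have "\<one>\<^bsub>C\<^esub> \<in> E p" using h.hom_one by simp
    then show ?thesis using one_in_ideal[OF Ei[of p]] by simp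
  qed
  have mBi: "ideal (Idl\<^bsub>C\<^esub> (v ` mB)) C" using C.genideal_ideal[OF vc[OF B.m_carr]] .
  have step: "len C (E j) (E (Suc j)) \<le> ?q" if j: "j < p" for j
  proof -
    have Cji: "ideal (Ch j) B" "ideal (Ch (Suc j)) B" using Chi j by auto
    obtain x where x: "x \<in> Ch (Suc j)" "x \<notin> Ch j" using Chs[OF j] by blast
    have xc: "x \<in> carrier B" using x Chc[of "Suc j"] j by auto
    have simple: "J = Ch (Suc j)" if J: "ideal J B" "Ch j \<subset> J" "J \<subseteq> Ch (Suc j)" for J
    proof (rule ccontr)
      assume "J \<noteq> Ch (Suc j)"
      then have "J \<subset> Ch (Suc j)" using J by blast
      from chain_insert[OF Ch j J(1) J(2) this] have "enat (Suc p) \<le> len B I (carrier B)" by (rule len_ge)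
      then show False using p by simp
    qed
    have plB: "pl B (Ch j) x = Ch (Suc j)"
    proof (rule simple)
      show "ideal (pl B (Ch j) x) B" using B.pl_ideal[OF Cji(1) xc] .
      show "Ch j \<subset> pl B (Ch j) x" using B.pl_sup[OF Cji(1) xc] x by blast
      show "pl B (Ch j) x \<subseteq> Ch (Suc j)" using B.pl_min[OF Cji(2) _ x(1)] Chs[OF j] by blast
    qed
    have bx: "b \<otimes>\<^bsub>B\<^esub> x \<in> Ch j" if b: "b \<in> mB" for b
    proof (rule ccontr)
      assume nb: "b \<otimes>\<^bsub>B\<^esub> x \<notin> Ch j"
      have bc: "b \<in> carrier B" using b B.m_carr by blast
      have bxc: "b \<otimes>\<^bsub>B\<^esub> x \<in> carrier B" using bc xc by simp
      have "pl B (Ch j) (b \<otimes>\<^bsub>B\<^esub> x) = Ch (Suc j)"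
      proof (rule simple)
        show "ideal (pl B (Ch j) (b \<otimes>\<^bsub>B\<^esub> x)) B" using B.pl_ideal[OF Cji(1) bxc] .
        show "Ch j \<subset> pl B (Ch j) (b \<otimes>\<^bsub>B\<^esub> x)" using B.pl_sup[OF Cji(1) bxc] nb by blast
        have "b \<otimes>\<^bsub>B\<^esub> x \<in> Ch (Suc j)" using ideal.I_l_closed[OF Cji(2) x(1) bc] .
        then show "pl B (Ch j) (b \<otimes>\<^bsub>B\<^esub> x) \<subseteq> Ch (Suc j)" using B.pl_min[OF Cji(2)] Chs[OF j] by blast
      qed
      then have "x \<in> pl B (Ch j) (b \<otimes>\<^bsub>B\<^esub> x)" using x by simp
      then have "\<exists>c r. x = c \<oplus>\<^bsub>B\<^esub> (b \<otimes>\<^bsub>B\<^esub> x) \<otimes>\<^bsub>B\<^esub> r \<and> c \<in> Ch j \<and> r \<in> carrier B" by (rule pl_memE)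
      then obtain c r where cr: "x = c \<oplus>\<^bsub>B\<^esub> (b \<otimes>\<^bsub>B\<^esub> x) \<otimes>\<^bsub>B\<^esub> r" "c \<in> Ch j" "r \<in> carrier B" by blast
      have xe: "(b \<otimes>\<^bsub>B\<^esub> x) \<otimes>\<^bsub>B\<^esub> r = x \<otimes>\<^bsub>B\<^esub> (b \<otimes>\<^bsub>B\<^esub> r)" using bc xc cr(3) by (simp add: B.m_ac)
      have "x = c \<oplus>\<^bsub>B\<^esub> x \<otimes>\<^bsub>B\<^esub> (b \<otimes>\<^bsub>B\<^esub> r)" unfolding xe[symmetric] by (rule cr(1))
      then have "x \<in> Ch j" by (rule B.nak[OF Cji(1) xc ideal.I_r_closed[OF B.m_ideal b cr(3)] cr(2)])
      then show False using x by blast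
    qed
    have vxc: "v x \<in> carrier C" using xc by simp
    have ESuc: "E (Suc j) = pl C (E j) (v x)"
    proof
      show "E (Suc j) \<subseteq> pl C (E j) (v x)"
        unfolding E_def[of "Suc j"]
      proof (rule C.genideal_minimal[OF C.pl_ideal[OF Ei vxc]])
        show "j \<le> p" using j by simp
        show "v ` Ch (Suc j) \<subseteq> pl C (E j) (v x)"
        proof
          fix w assume "w \<in> v ` Ch (Suc j)"
          then obtain z where z: "z \<in> Ch (Suc j)" "w = v z" by blast
          then have "z \<in> pl B (Ch j) x" using plB by simp
          then have "\<exists>c r. z = c \<oplus>\<^bsub>B\<^esub> x \<otimes>\<^bsub>B\<^esub> r \<and> c \<in> Ch j \<and> r \<in> carrier B" by (rule pl_memE)
          then obtain c r where cr: "z = c \<oplus>\<^bsub>B\<^esub> x \<otimes>\<^bsub>B\<^esub> r" "c \<in> Ch j" "r \<in> carrier B" by blast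
          have cc: "c \<in> carrier B" using cr(2) Chc[of j] j by auto
          have "w = v c \<oplus>\<^bsub>C\<^esub> v x \<otimes>\<^bsub>C\<^esub> v r" using z(2) cr(1) cc xc cr(3) by simp
          moreover have "v c \<in> E j" using Eself[of j] j cr(2) by auto
          ultimately show "w \<in> pl C (E j) (v x)" using pl_memI[where y="v x", OF _ ring_hom_closed[OF v cr(3)]] by simp
        qed
      qed
      show "pl C (E j) (v x) \<subseteq> E (Suc j)"
        using C.pl_min[OF Ei[of "Suc j"] Emono[OF j]] Eself[of "Suc j"] x(1) j by auto
    qed
    have col: "Idl\<^bsub>C\<^esub> (v ` mB) \<subseteq> colI C (E j) (v x)"
    proof (rule C.genideal_minimal[OF C.colI_ideal[OF Ei vxc]])
      show "j \<le> p" using j by simp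
      show "v ` mB \<subseteq> colI C (E j) (v x)"
      proof
        fix w assume "w \<in> v ` mB"
        then obtain b where b: "b \<in> mB" "w = v b" by blast
        have bc: "b \<in> carrier B" using b B.m_carr by blast
        have "v (b \<otimes>\<^bsub>B\<^esub> x) = v b \<otimes>\<^bsub>C\<^esub> v x" using bc xc by simp
        then have "v x \<otimes>\<^bsub>C\<^esub> v b = v (b \<otimes>\<^bsub>B\<^esub> x)"
          using C.m_comm[OF ring_hom_closed[OF v xc] ring_hom_closed[OF v bc]] by simp
        moreover have "v (b \<otimes>\<^bsub>B\<^esub> x) \<in> E j" using Eself[of j] j bx[OF b(1)] by (meson image_eqI subsetD less_imp_le)
        ultimately show "w \<in> colI C (E j) (v x)" using b bc by (simp add: colI_def)
      qed
    qed
    have "len C (E j) (E (Suc j)) \<le> len C (colI C (E j) (v x)) (carrier C)"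
      unfolding ESuc using C.len_colon[OF Ei vxc] j by simp
    also have "\<dots> \<le> ?q" using len_mono_left[OF mBi col] .
    finally show ?thesis .
  qed
  have "len C (E 0) (E p) \<le> enat p * ?q \<and> E 0 \<subseteq> E p"
    by (rule C.len_filtration) (use Ei Emono step in auto)
  then show ?thesis using E0 Ep by simp
qed


lemma nlr_of:
  assumes "noeth_local_ring R" shows "nlr R (max_ideal R)"
proof -
  have c: "cring R" and u: "\<exists>!m. maximalideal m R" and n: "noetherian_ring R"
    using assms unfolding noeth_local_ring_def local_ring_def by auto
  have mx: "maximalideal (max_ideal R) R" unfolding max_ideal_def using theI'[OF u] .
  show ?thesis
  proof (intro nlr.intro nlr_axioms.intro c n mx)
    fix M assume "maximalideal M R"
    then show "M = max_ideal R" using u mx by blast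
  qed
qed

lemma Idl_ideal_eq:
  assumes "ring R" "ideal I R" shows "Idl\<^bsub>R\<^esub> I = I"
proof -
  interpret ring R by fact
  show ?thesis using genideal_minimal[OF assms(2)] genideal_self[OF ideal_carr[OF assms(2)]] by blast
qed

lemma hom_length_alt: "hom_length A B u = len B (Idl\<^bsub>B\<^esub> (u ` max_ideal A)) (carrier B)"
  unfolding hom_length_def quot_length_len ..

lemma flh_finite:
  assumes A: "noeth_local_ring A" and B: "noeth_local_ring B" and u: "finite_length_hom A B u"
  shows "hom_length A B u < \<infinity>"
proof -
  interpret B: nlr B "max_ideal B" using nlr_of[OF B] .
  have uh: "u \<in> ring_hom A B" and um: "u ` max_ideal A \<subseteq> max_ideal B"
    and P: "P_primary B (max_ideal B) (Idl\<^bsub>B\<^esub> (u ` max_ideal A))"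
    using u unfolding finite_length_hom_def by auto
  let ?Q = "Idl\<^bsub>B\<^esub> (u ` max_ideal A)"
  have Q: "ideal ?Q B" and rad: "radical B ?Q = max_ideal B"
    using P unfolding P_primary_def primary_ideal_def by auto
  have Qm: "?Q \<subseteq> max_ideal B" using B.genideal_minimal[OF B.m_ideal um] .
  have r: "\<exists>k::nat. x [^]\<^bsub>B\<^esub> k \<in> ?Q" if "x \<in> max_ideal B" for x
    using that rad unfolding radical_def by blast
  show ?thesis unfolding hom_length_alt using B.finite_len[OF Q Qm r] by blast
qed

lemma hom_length_ge1:
  assumes B: "noeth_local_ring B" and um: "u ` max_ideal A \<subseteq> max_ideal B" and uc: "u ` max_ideal A \<subseteq> carrier B"
  shows "1 \<le> hom_length A B u"
proof -
  interpret B: nlr B "max_ideal B" using nlr_of[OF B] .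
  let ?Q = "Idl\<^bsub>B\<^esub> (u ` max_ideal A)"
  have Q: "ideal ?Q B" using B.genideal_ideal[OF uc] .
  have Qm: "?Q \<subseteq> max_ideal B" using B.genideal_minimal[OF B.m_ideal um] .
  then have "?Q \<subset> carrier B" using B.m_proper B.m_carr by blast
  then have "chainI B ?Q (carrier B) 1 (\<lambda>i. if i = 0 then ?Q else carrier B)"
    using Q by (auto simp: chainI_def B.oneideal)
  then have "enat 1 \<le> hom_length A B u" unfolding hom_length_alt by (rule len_ge)
  then show ?thesis by (simp add: one_enat_def)
qed

lemma comp_bound:
  assumes A: "cring A" and B: "noeth_local_ring B" and C: "cring C"
    and u: "u \<in> ring_hom A B" and v: "v \<in> ring_hom B C"
    and mA: "max_ideal A \<subseteq> carrier A"
    and p: "hom_length A B u = enat p"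
  shows "hom_length A C (v \<circ> u) \<le> enat p * hom_length B C v"
proof -
  interpret B: nlr B "max_ideal B" using nlr_of[OF B] .
  have uc: "u ` max_ideal A \<subseteq> carrier B" using mA ring_hom_closed[OF u] by blast
  have e: "Idl\<^bsub>C\<^esub> ((v \<circ> u) ` max_ideal A) = Idl\<^bsub>C\<^esub> (v ` (Idl\<^bsub>B\<^esub> (u ` max_ideal A)))"
    using Idl_comp[OF B.cring_axioms C v uc] by (simp add: image_comp)
  have I: "ideal (Idl\<^bsub>B\<^esub> (u ` max_ideal A)) B" using B.genideal_ideal[OF uc] .
  have p': "len B (Idl\<^bsub>B\<^esub> (u ` max_ideal A)) (carrier B) = enat p" using p unfolding hom_length_alt .
  show ?thesis unfolding hom_length_alt e
    using submult[OF nlr_of[OF B] C v I p'] by simp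
qed

lemma comp_lower:
  assumes C: "cring C" and v: "v \<in> ring_hom B C"
    and mB: "max_ideal B \<subseteq> carrier B" and um: "u ` max_ideal A \<subseteq> max_ideal B"
  shows "hom_length B C v \<le> hom_length A C (v \<circ> u)"
proof -
  interpret C: cring C by fact
  have vc: "v ` max_ideal B \<subseteq> carrier C" using mB ring_hom_closed[OF v] by blast
  have "(v \<circ> u) ` max_ideal A \<subseteq> v ` max_ideal B" using um by auto
  also have "\<dots> \<subseteq> Idl\<^bsub>C\<^esub> (v ` max_ideal B)" using C.genideal_self[OF vc] .
  finally have sub: "Idl\<^bsub>C\<^esub> ((v \<circ> u) ` max_ideal A) \<subseteq> Idl\<^bsub>C\<^esub> (v ` max_ideal B)"
    using C.genideal_minimal[OF C.genideal_ideal[OF vc]] by blast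
  have vuc: "(v \<circ> u) ` max_ideal A \<subseteq> carrier C" using \<open>(v \<circ> u) ` max_ideal A \<subseteq> v ` max_ideal B\<close> vc by blast
  show ?thesis unfolding hom_length_alt
    by (rule len_mono_left[OF C.genideal_ideal[OF vuc] sub])
qed


lemma ln_bound:
  fixes A B :: "nat \<Rightarrow> nat" and c :: nat
  assumes A1: "\<And>n. 1 \<le> A n" and B1: "\<And>n. 1 \<le> B n"
    and Am: "\<And>n. A n \<le> A (Suc n)" and AB: "\<And>n. A (Suc n) \<le> c * B n"
  shows "ln (real (A n)) \<le> ln (real c) + ln (real (B n))"
proof -
  have "A n \<le> c * B n" using Am[of n] AB[of n] by linarith
  then have le: "real (A n) \<le> real c * real (B n)" by (metis of_nat_le_iff of_nat_mult)
  have pos: "0 < real (A n)" "0 < real (B n)" using A1[of n] B1[of n] by auto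
  then have "0 < real c" using le by (metis mult_eq_0_iff not_less of_nat_0_le_iff order.antisym)
  then have "ln (real (A n)) \<le> ln (real c * real (B n))" using le pos by simp
  also have "\<dots> = ln (real c) + ln (real (B n))" using pos \<open>0 < real c\<close> by (simp add: ln_mult)
  finally show ?thesis .
qed

lemma lim_eq_aux:
  fixes A B :: "nat \<Rightarrow> nat" and c :: nat
  assumes A1: "\<And>n. 1 \<le> A n" and B1: "\<And>n. 1 \<le> B n"
    and Am: "\<And>n. A n \<le> A (Suc n)" and Bm: "\<And>n. B n \<le> B (Suc n)"
    and AB: "\<And>n. A (Suc n) \<le> c * B n" and BA: "\<And>n. B (Suc n) \<le> c * A n"
  shows "lim (\<lambda>n. ln (real (A n)) / real n) = lim (\<lambda>n. ln (real (B n)) / real n)"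
proof -
  define X where "X n = ln (real (A n)) / real n" for n
  define Y where "Y n = ln (real (B n)) / real n" for n
  have b1: "ln (real (A n)) \<le> ln (real c) + ln (real (B n))" for n by (rule ln_bound[where A=A and B=B and c=c]) (use A1 B1 Am AB in auto)
  have b2: "ln (real (B n)) \<le> ln (real c) + ln (real (A n))" for n by (rule ln_bound[where A=B and B=A and c=c]) (use A1 B1 Bm BA in auto)
  have D: "(\<lambda>n. X n - Y n) \<longlonglongrightarrow> 0"
  proof (rule tendsto_0_le[OF lim_1_over_n, where K = "ln (real c)"])
    show "\<forall>\<^sub>F n in sequentially. norm (X n - Y n) \<le> norm (1 / real n) * ln (real c)"
    proof (rule always_eventually, rule allI)
      fix n
      have "\<bar>ln (real (A n)) - ln (real (B n))\<bar> \<le> ln (real c)" using b1[of n] b2[of n] by linarith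
      moreover have "X n - Y n = (ln (real (A n)) - ln (real (B n))) / real n"
        unfolding X_def Y_def by (simp add: diff_divide_distrib)
      ultimately show "norm (X n - Y n) \<le> norm (1 / real n) * ln (real c)"
        by (cases "n = 0") (auto simp: divide_simps abs_divide)
    qed
  qed
  have eq: "(X \<longlonglongrightarrow> L) = (Y \<longlonglongrightarrow> L)" for L
  proof
    assume "X \<longlonglongrightarrow> L"
    from tendsto_diff[OF this D] show "Y \<longlonglongrightarrow> L" by simp
  next
    assume "Y \<longlonglongrightarrow> L"
    from tendsto_add[OF this D] show "X \<longlonglongrightarrow> L" by simp
  qed
  have "lim X = lim Y" unfolding lim_def using eq by simp
  then show ?thesis unfolding X_def Y_def .
qed


lemma iter_props:
  assumes nR: "noeth_local_ring R" and nS: "noeth_local_ring S"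
    and fl: "finite_length_hom R S f" and gl: "finite_length_hom S R g"
  shows "finite_length_hom R R (g \<circ> f)"
    and "(g \<circ> f) ^^ n \<in> ring_hom R R \<and> ((g \<circ> f) ^^ n) ` max_ideal R \<subseteq> max_ideal R \<and>
         hom_length R R ((g \<circ> f) ^^ n) < \<infinity> \<and> 1 \<le> hom_length R R ((g \<circ> f) ^^ n)"
proof -
  interpret R: nlr R "max_ideal R" using nlr_of[OF nR] .
  interpret S: nlr S "max_ideal S" using nlr_of[OF nS] .
  have fh: "f \<in> ring_hom R S" and fm: "f ` max_ideal R \<subseteq> max_ideal S"
    using fl unfolding finite_length_hom_def by auto
  have gh: "g \<in> ring_hom S R" and gm: "g ` max_ideal S \<subseteq> max_ideal R"
    using gl unfolding finite_length_hom_def by auto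
  have gfh: "g \<circ> f \<in> ring_hom R R" using ring_hom_trans[OF fh gh] .
  have gfm: "(g \<circ> f) ` max_ideal R \<subseteq> max_ideal R" using fm gm by auto
  obtain pf where pf: "hom_length R S f = enat pf" using flh_finite[OF nR nS fl] by (auto elim: less_infinityE)
  obtain pg where pg: "hom_length S R g = enat pg" using flh_finite[OF nS nR gl] by (auto elim: less_infinityE)
  have "hom_length R R (g \<circ> f) \<le> enat pf * hom_length S R g"
    by (rule comp_bound[OF R.cring_axioms nS R.cring_axioms fh gh R.m_carr pf])
  then have gffin: "hom_length R R (g \<circ> f) < \<infinity>" using pg
    by (metis enat_ord_simps(4) infinity_ileE times_enat_simps(1) not_le)
  have gfc: "(g \<circ> f) ` max_ideal R \<subseteq> carrier R" using gfm R.m_carr by blast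
  show "finite_length_hom R R (g \<circ> f)"
    unfolding finite_length_hom_def
  proof (intro conjI gfh gfm)
    show "P_primary R (max_ideal R) (Idl\<^bsub>R\<^esub> ((g \<circ> f) ` max_ideal R))"
    proof (rule R.primary_of_finite)
      show "ideal (Idl\<^bsub>R\<^esub> ((g \<circ> f) ` max_ideal R)) R" using R.genideal_ideal[OF gfc] .
      show "Idl\<^bsub>R\<^esub> ((g \<circ> f) ` max_ideal R) \<subseteq> max_ideal R" using R.genideal_minimal[OF R.m_ideal gfm] .
      show "len R (Idl\<^bsub>R\<^esub> ((g \<circ> f) ` max_ideal R)) (carrier R) < \<infinity>" using gffin unfolding hom_length_alt .
    qed
  qed
  show "(g \<circ> f) ^^ n \<in> ring_hom R R \<and> ((g \<circ> f) ^^ n) ` max_ideal R \<subseteq> max_ideal R \<and>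
         hom_length R R ((g \<circ> f) ^^ n) < \<infinity> \<and> 1 \<le> hom_length R R ((g \<circ> f) ^^ n)"
  proof (induction n)
    case 0
    have e: "Idl\<^bsub>R\<^esub> (id ` max_ideal R) = max_ideal R" using Idl_ideal_eq[OF R.ring_axioms R.m_ideal] by simp
    have "hom_length R R id \<le> 1" unfolding hom_length_alt e using R.len_m .
    then have i3: "hom_length R R id < \<infinity>" by (metis enat_ord_simps(4) infinity_ileE one_enat_def not_le)
    have i4: "1 \<le> hom_length R R id" by (rule hom_length_ge1[OF nR]) (use R.m_carr in auto)
    have i1: "id \<in> ring_hom R R" by (rule id_ring_hom)
    have i2: "id ` max_ideal R \<subseteq> max_ideal R" by simp
    show ?case unfolding funpow.simps(1) using i1 i2 i3 i4 by blast
  next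
    case (Suc n)
    let ?h = "(g \<circ> f) ^^ n"
    have h: "?h \<in> ring_hom R R" "?h ` max_ideal R \<subseteq> max_ideal R" "hom_length R R ?h < \<infinity>"
      using Suc.IH by blast+
    have e: "(g \<circ> f) ^^ Suc n = (g \<circ> f) \<circ> ?h" by simp
    have hs: "(g \<circ> f) \<circ> ?h \<in> ring_hom R R" using ring_hom_trans[OF h(1) gfh] .
    have ms: "((g \<circ> f) \<circ> ?h) ` max_ideal R \<subseteq> max_ideal R" using h(2) gfm by (auto simp: image_comp[symmetric])
    obtain ph where ph: "hom_length R R ?h = enat ph" using h(3) by (auto elim: less_infinityE)
    obtain q where q: "hom_length R R (g \<circ> f) = enat q" using gffin by (auto elim: less_infinityE)
    have "hom_length R R ((g \<circ> f) \<circ> ?h) \<le> enat ph * hom_length R R (g \<circ> f)"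
      by (rule comp_bound[OF R.cring_axioms nR R.cring_axioms h(1) gfh R.m_carr ph])
    then have fin: "hom_length R R ((g \<circ> f) \<circ> ?h) < \<infinity>" using q
      by (metis enat_ord_simps(4) infinity_ileE times_enat_simps(1) not_le)
    have ge: "1 \<le> hom_length R R ((g \<circ> f) \<circ> ?h)"
      by (rule hom_length_ge1[OF nR ms]) (use ms R.m_carr in auto)
    show ?case unfolding e using hs ms fin ge by blast
  qed
qed

lemma funpow_comp_swap_pt: "((g \<circ> f) ^^ n) (g y) = g (((f \<circ> g) ^^ n) y)"
  by (induction n) auto

lemma funpow_Suc_swap: "(g \<circ> f) ^^ Suc n = g \<circ> ((f \<circ> g) ^^ n \<circ> f)"
proof (rule ext)
  fix x
  have "((g \<circ> f) ^^ Suc n) x = ((g \<circ> f) ^^ n) (g (f x))" by (simp only: funpow_Suc_right o_apply)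
  also have "\<dots> = g (((f \<circ> g) ^^ n) (f x))" by (rule funpow_comp_swap_pt)
  finally show "((g \<circ> f) ^^ Suc n) x = (g \<circ> ((f \<circ> g) ^^ n \<circ> f)) x" by simp
qed


lemma enat_fin_le: "(x::enat) \<le> enat a * y \<Longrightarrow> y < \<infinity> \<Longrightarrow> x < \<infinity>"
  by (metis enat_ord_simps(4) infinity_ileE times_enat_simps(1) not_le less_infinityE)

lemma cross_bounds:
  assumes nR: "noeth_local_ring R" and nS: "noeth_local_ring S"
    and fl: "finite_length_hom R S f" and gl: "finite_length_hom S R g"
    and pf: "hom_length R S f = enat pf" and pg: "hom_length S R g = enat pg"
  shows "hom_length R R ((g \<circ> f) ^^ n) \<le> hom_length R R ((g \<circ> f) ^^ Suc n)"
    and "hom_length R R ((g \<circ> f) ^^ Suc n) \<le> enat (pf * pg) * hom_length S S ((f \<circ> g) ^^ n)"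
proof -
  interpret R: nlr R "max_ideal R" using nlr_of[OF nR] .
  interpret S: nlr S "max_ideal S" using nlr_of[OF nS] .
  have fh: "f \<in> ring_hom R S" and fm: "f ` max_ideal R \<subseteq> max_ideal S"
    using fl unfolding finite_length_hom_def by auto
  have gh: "g \<in> ring_hom S R" and gm: "g ` max_ideal S \<subseteq> max_ideal R"
    using gl unfolding finite_length_hom_def by auto
  have gfm: "(g \<circ> f) ` max_ideal R \<subseteq> max_ideal R" using fm gm by auto
  have IR: "((g \<circ> f) ^^ n) \<in> ring_hom R R" using iter_props(2)[OF nR nS fl gl, of n] by blast
  have IS: "((f \<circ> g) ^^ n) \<in> ring_hom S S" "hom_length S S ((f \<circ> g) ^^ n) < \<infinity>"
    using iter_props(2)[OF nS nR gl fl, of n] by blast+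
  have "hom_length R R ((g \<circ> f) ^^ n) \<le> hom_length R R ((g \<circ> f) ^^ n \<circ> (g \<circ> f))"
    by (rule comp_lower[OF R.cring_axioms IR R.m_carr gfm])
  then show "hom_length R R ((g \<circ> f) ^^ n) \<le> hom_length R R ((g \<circ> f) ^^ Suc n)"
    by (simp only: funpow_Suc_right)
  let ?w = "(f \<circ> g) ^^ n \<circ> f"
  have wh: "?w \<in> ring_hom R S" using ring_hom_trans[OF fh IS(1)] .
  have w1: "hom_length R S ?w \<le> enat pf * hom_length S S ((f \<circ> g) ^^ n)"
    by (rule comp_bound[OF R.cring_axioms nS S.cring_axioms fh IS(1) R.m_carr pf])
  then obtain pw where pw: "hom_length R S ?w = enat pw" using IS(2) enat_fin_le
    by (metis less_infinityE)
  have w2: "hom_length R R (g \<circ> ?w) \<le> enat pw * hom_length S R g"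
    by (rule comp_bound[OF R.cring_axioms nS R.cring_axioms wh gh R.m_carr pw])
  have "hom_length R R ((g \<circ> f) ^^ Suc n) = hom_length R R (g \<circ> ?w)" by (simp only: funpow_Suc_swap)
  also have "\<dots> \<le> enat pw * enat pg" using w2 pg by simp
  also have "\<dots> \<le> enat pf * hom_length S S ((f \<circ> g) ^^ n) * enat pg"
    using w1 pw by (intro mult_right_mono) auto
  also have "\<dots> = enat (pf * pg) * hom_length S S ((f \<circ> g) ^^ n)"
    by (metis mult.assoc mult.commute times_enat_simps(1))
  finally show "hom_length R R ((g \<circ> f) ^^ Suc n) \<le> enat (pf * pg) * hom_length S S ((f \<circ> g) ^^ n)" .
qed

theorem mainTheorem12:
  fixes R :: "('a, 'm) ring_scheme" and S :: "('b, 'n) ring_scheme"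
    and f :: "'a \<Rightarrow> 'b" and g :: "'b \<Rightarrow> 'a"
  assumes "noeth_local_ring R" and "noeth_local_ring S"
    and "finite_length_hom R S f" and "finite_length_hom S R g"
  shows "finite_length_hom R R (g \<circ> f) \<and> finite_length_hom S S (f \<circ> g) \<and>
         h_alg R (g \<circ> f) = h_alg S (f \<circ> g)"
proof -
  note nR = assms(1) and nS = assms(2) and fl = assms(3) and gl = assms(4)
  obtain pf where pf: "hom_length R S f = enat pf" using flh_finite[OF nR nS fl] by (auto elim: less_infinityE)
  obtain pg where pg: "hom_length S R g = enat pg" using flh_finite[OF nS nR gl] by (auto elim: less_infinityE)
  define A where "A n = the_enat (hom_length R R ((g \<circ> f) ^^ n))" for n
  define B where "B n = the_enat (hom_length S S ((f \<circ> g) ^^ n))" for n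
  have Ae: "hom_length R R ((g \<circ> f) ^^ n) = enat (A n)" for n
    using iter_props(2)[OF nR nS fl gl, of n] unfolding A_def by (auto elim!: less_infinityE)
  have Be: "hom_length S S ((f \<circ> g) ^^ n) = enat (B n)" for n
    using iter_props(2)[OF nS nR gl fl, of n] unfolding B_def by (auto elim!: less_infinityE)
  have A1: "1 \<le> A n" for n using iter_props(2)[OF nR nS fl gl, of n] Ae[of n] by (simp add: one_enat_def)
  have B1: "1 \<le> B n" for n using iter_props(2)[OF nS nR gl fl, of n] Be[of n] by (simp add: one_enat_def)
  have Am: "A n \<le> A (Suc n)" for n using cross_bounds(1)[OF nR nS fl gl pf pg, of n] Ae[of n] Ae[of "Suc n"]
    by (metis enat_ord_simps(1))
  have Bm: "B n \<le> B (Suc n)" for n using cross_bounds(1)[OF nS nR gl fl pg pf, of n] Be[of n] Be[of "Suc n"]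
    by (metis enat_ord_simps(1))
  have AB: "A (Suc n) \<le> (pf * pg) * B n" for n
    using cross_bounds(2)[OF nR nS fl gl pf pg, of n] Ae[of "Suc n"] Be[of n]
    by (metis enat_ord_simps(1) times_enat_simps(1))
  have BA: "B (Suc n) \<le> (pf * pg) * A n" for n
    using cross_bounds(2)[OF nS nR gl fl pg pf, of n] Be[of "Suc n"] Ae[of n]
    by (metis enat_ord_simps(1) times_enat_simps(1) mult.commute)
  have "h_alg R (g \<circ> f) = lim (\<lambda>n. ln (real (A n)) / real n)" unfolding h_alg_def A_def ..
  also have "\<dots> = lim (\<lambda>n. ln (real (B n)) / real n)" by (rule lim_eq_aux[where A=A and B=B and c="pf * pg"]) (use A1 B1 Am Bm AB BA in auto)
  also have "\<dots> = h_alg S (f \<circ> g)" unfolding h_alg_def B_def ..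
  finally show ?thesis using iter_props(1)[OF nR nS fl gl] iter_props(1)[OF nS nR gl fl] by blast
qed


end
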